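(* Let $G=(V,E)$ be a finite simple graph that is both $P_6$-free and banner-free. If $G$ has an efficient dominating set, then the square $G^2$ is $P_6$-free.
   Context: All graphs are finite, undirected and simple. $P_t$ denotes the path on $t$ vertices. For a family $\mathcal{F}$ of graphs, a graph $G$ is $\mathcal{F}$-free if it contains no induced subgraph isomorphic to a member of $\mathcal{F}$. A banner is the graph obtained from a chordless cycle on four vertices by adding one new vertex adjacent to exactly one vertex of the cycle. An efficient dominating set of $G$ is a subset $D\subseteq V$ that is an independent set such that every vertex of $V\setminus D$ has exactly one neighbor in $D$. For vertices $u,v$, $\mathrm{dist}_G(u,v)$ is the distance between them in $G$. The square of $G=(V,E)$ is the graph $G^2=(V,E^2)$ where $uv\in E^2$ if and only if $\mathrm{dist}_G(u,v)\in\{1,2\}$. *)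

theory Defs
  imports Main
begin

definition simple_graph :: "'a set \<Rightarrow> ('a \<Rightarrow> 'a \<Rightarrow> bool) \<Rightarrow> bool" where
  "simple_graph V E \<longleftrightarrow> finite V \<and> (\<forall>u v. E u v \<longrightarrow> u \<in> V \<and> v \<in> V)
     \<and> (\<forall>u v. E u v \<longrightarrow> E v u) \<and> (\<forall>v. \<not> E v v)"

definition has_induced :: "'a set \<Rightarrow> ('a \<Rightarrow> 'a \<Rightarrow> bool) \<Rightarrow> 'b set \<Rightarrow> ('b \<Rightarrow> 'b \<Rightarrow> bool) \<Rightarrow> bool" where
  "has_induced V E W F \<longleftrightarrow> (\<exists>f. inj_on f W \<and> f ` W \<subseteq> V \<and>
      (\<forall>x\<in>W. \<forall>y\<in>W. E (f x) (f y) \<longleftrightarrow> F x y))"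

definition path_verts :: "nat \<Rightarrow> nat set" where
  "path_verts t = {0..<t}"
definition path_adj :: "nat \<Rightarrow> nat \<Rightarrow> bool" where
  "path_adj i j \<longleftrightarrow> i = Suc j \<or> j = Suc i"

definition banner_verts :: "nat set" where
  "banner_verts = {0..<5}"
definition banner_adj :: "nat \<Rightarrow> nat \<Rightarrow> bool" where
  "banner_adj i j \<longleftrightarrow> {i, j} \<in> {{0,1}, {1,2}, {2,3}, {3,0}, {0,4}}"

definition P_free :: "nat \<Rightarrow> 'a set \<Rightarrow> ('a \<Rightarrow> 'a \<Rightarrow> bool) \<Rightarrow> bool" where
  "P_free t V E \<longleftrightarrow> \<not> has_induced V E (path_verts t) path_adj"

definition banner_free :: "'a set \<Rightarrow> ('a \<Rightarrow> 'a \<Rightarrow> bool) \<Rightarrow> bool" where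
  "banner_free V E \<longleftrightarrow> \<not> has_induced V E banner_verts banner_adj"

definition efficient_dominating_set :: "'a set \<Rightarrow> ('a \<Rightarrow> 'a \<Rightarrow> bool) \<Rightarrow> 'a set \<Rightarrow> bool" where
  "efficient_dominating_set V E D \<longleftrightarrow> D \<subseteq> V \<and> (\<forall>x\<in>D. \<forall>y\<in>D. \<not> E x y)
     \<and> (\<forall>v\<in>V - D. \<exists>!d. d \<in> D \<and> E v d)"

text \<open>Graph distance: dist_le V E k u v holds iff there is a walk of length at most k
  from u to v; dist_G(u,v) = d iff dist_le d holds and dist_le (d-1) does not.\<close>
fun walk_le :: "('a \<Rightarrow> 'a \<Rightarrow> bool) \<Rightarrow> nat \<Rightarrow> 'a \<Rightarrow> 'a \<Rightarrow> bool" where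
  "walk_le E 0 u v \<longleftrightarrow> u = v"
| "walk_le E (Suc k) u v \<longleftrightarrow> u = v \<or> (\<exists>w. E u w \<and> walk_le E k w v)"

text \<open>Square: uv is an edge iff dist(u,v) \<in> {1,2}, i.e. u \<noteq> v and there is a walk of length \<le> 2.\<close>
definition square :: "('a \<Rightarrow> 'a \<Rightarrow> bool) \<Rightarrow> 'a \<Rightarrow> 'a \<Rightarrow> bool" where
  "square E u v \<longleftrightarrow> u \<noteq> v \<and> walk_le E 2 u v"

end

theory Submission
  imports Defs
begin

declare [[smt_timeout=1000]]

lemma walk2: "walk_le E 2 u v \<longleftrightarrow> u = v \<or> E u v \<or> (\<exists>w. E u w \<and> E w v)"
  by (auto simp: numeral_2_eq_2)

lemma sq_near: "square E u v \<Longrightarrow> E u v \<or> (\<exists>w. E u w \<and> E w v)"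
  by (auto simp: square_def walk2)

lemma sq_far: "\<not> square E u v \<Longrightarrow> u \<noteq> v \<Longrightarrow> \<not> E u v \<and> (\<forall>w. \<not> (E u w \<and> E w v))"
  by (auto simp: square_def walk2)

lemma p6_rule:
  assumes sg: "simple_graph V E" and pf: "P_free 6 V E"
  shows "\<not> (a \<noteq> b \<and> a \<noteq> c \<and> a \<noteq> d \<and> a \<noteq> e \<and> a \<noteq> f \<and> b \<noteq> c \<and> b \<noteq> d \<and> b \<noteq> e \<and> b \<noteq> f \<and> c \<noteq> d \<and> c \<noteq> e \<and> c \<noteq> f \<and> d \<noteq> e \<and> d \<noteq> f \<and> e \<noteq> f \<and> E a b \<and> E b c \<and> E c d \<and> E d e \<and> E e f \<and> \<not> E a c \<and> \<not> E a d \<and> \<not> E a e \<and> \<not> E a f \<and> \<not> E b d \<and> \<not> E b e \<and> \<not> E b f \<and> \<not> E c e \<and> \<not> E c f \<and> \<not> E d f)"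
proof
  assume H: "a \<noteq> b \<and> a \<noteq> c \<and> a \<noteq> d \<and> a \<noteq> e \<and> a \<noteq> f \<and> b \<noteq> c \<and> b \<noteq> d \<and> b \<noteq> e \<and> b \<noteq> f \<and> c \<noteq> d \<and> c \<noteq> e \<and> c \<noteq> f \<and> d \<noteq> e \<and> d \<noteq> f \<and> e \<noteq> f \<and> E a b \<and> E b c \<and> E c d \<and> E d e \<and> E e f \<and> \<not> E a c \<and> \<not> E a d \<and> \<not> E a e \<and> \<not> E a f \<and> \<not> E b d \<and> \<not> E b e \<and> \<not> E b f \<and> \<not> E c e \<and> \<not> E c f \<and> \<not> E d f"
  define g where "g = (\<lambda>i::nat. [a,b,c,d,e,f] ! i)"
  have W: "path_verts 6 = {0,1,2,3,4,5}" by (auto simp: path_verts_def)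
  have sy: "\<And>x y. E x y \<Longrightarrow> E y x" and ir: "\<And>x. \<not> E x x" and ev: "\<And>x y. E x y \<Longrightarrow> x \<in> V" "\<And>x y. E x y \<Longrightarrow> y \<in> V"
    using sg by (auto simp: simple_graph_def)
  have "has_induced V E (path_verts 6) path_adj"
    unfolding has_induced_def W
  proof (intro exI conjI)
    show "inj_on g {0,1,2,3,4,5}" using H by (auto simp: g_def inj_on_def)
    show "g ` {0,1,2,3,4,5} \<subseteq> V" using H ev by (auto simp: g_def)
    show "\<forall>x\<in>{0,1,2,3,4,5}. \<forall>y\<in>{0,1,2,3,4,5}. E (g x) (g y) = path_adj x y"
      using H sy ir by (auto simp: g_def path_adj_def)
  qed
  with pf show False by (simp add: P_free_def)
qed

lemma ban_rule:
  assumes sg: "simple_graph V E" and bf: "banner_free V E"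
  shows "\<not> (a \<noteq> b \<and> a \<noteq> c \<and> a \<noteq> d \<and> a \<noteq> e \<and> b \<noteq> c \<and> b \<noteq> d \<and> b \<noteq> e \<and> c \<noteq> d \<and> c \<noteq> e \<and> d \<noteq> e \<and> E a b \<and> E b c \<and> E c d \<and> E d a \<and> E a e \<and> \<not> E a c \<and> \<not> E b d \<and> \<not> E b e \<and> \<not> E c e \<and> \<not> E d e)"
proof
  assume H: "a \<noteq> b \<and> a \<noteq> c \<and> a \<noteq> d \<and> a \<noteq> e \<and> b \<noteq> c \<and> b \<noteq> d \<and> b \<noteq> e \<and> c \<noteq> d \<and> c \<noteq> e \<and> d \<noteq> e \<and> E a b \<and> E b c \<and> E c d \<and> E d a \<and> E a e \<and> \<not> E a c \<and> \<not> E b d \<and> \<not> E b e \<and> \<not> E c e \<and> \<not> E d e"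
  define g where "g = (\<lambda>i::nat. [a,b,c,d,e] ! i)"
  have W: "banner_verts = {0,1,2,3,4}" by (auto simp: banner_verts_def)
  have sy: "\<And>x y. E x y \<Longrightarrow> E y x" and ir: "\<And>x. \<not> E x x" and ev: "\<And>x y. E x y \<Longrightarrow> x \<in> V" "\<And>x y. E x y \<Longrightarrow> y \<in> V"
    using sg by (auto simp: simple_graph_def)
  have "has_induced V E banner_verts banner_adj"
    unfolding has_induced_def W
  proof (intro exI conjI)
    show "inj_on g {0,1,2,3,4}" using H by (auto simp: g_def inj_on_def)
    show "g ` {0,1,2,3,4} \<subseteq> V" using H ev by (auto simp: g_def)
    show "\<forall>x\<in>{0,1,2,3,4}. \<forall>y\<in>{0,1,2,3,4}. E (g x) (g y) = banner_adj x y"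
      using H sy ir by (auto simp: g_def banner_adj_def doubleton_eq_iff)
  qed
  with bf show False by (simp add: banner_free_def)
qed

lemma midM:
  fixes E :: "'a \<Rightarrow> 'a \<Rightarrow> bool"
  assumes sym: "\<forall>x y. E x y \<longrightarrow> E y x" and irr: "\<forall>x. \<not> E x x"
  and p6: "\<And>a b c d e f. \<not> (a \<noteq> b \<and> a \<noteq> c \<and> a \<noteq> d \<and> a \<noteq> e \<and> a \<noteq> f \<and> b \<noteq> c \<and> b \<noteq> d \<and> b \<noteq> e \<and> b \<noteq> f \<and> c \<noteq> d \<and> c \<noteq> e \<and> c \<noteq> f \<and> d \<noteq> e \<and> d \<noteq> f \<and> e \<noteq> f \<and> E a b \<and> E b c \<and> E c d \<and> E d e \<and> E e f \<and> \<not> E a c \<and> \<not> E a d \<and> \<not> E a e \<and> \<not> E a f \<and> \<not> E b d \<and> \<not> E b e \<and> \<not> E b f \<and> \<not> E c e \<and> \<not> E c f \<and> \<not> E d f)"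
  and ban: "\<And>a b c d e. \<not> (a \<noteq> b \<and> a \<noteq> c \<and> a \<noteq> d \<and> a \<noteq> e \<and> b \<noteq> c \<and> b \<noteq> d \<and> b \<noteq> e \<and> c \<noteq> d \<and> c \<noteq> e \<and> d \<noteq> e \<and> E a b \<and> E b c \<and> E c d \<and> E d a \<and> E a e \<and> \<not> E a c \<and> \<not> E b d \<and> \<not> E b e \<and> \<not> E c e \<and> \<not> E d e)"
  and f1: "\<forall>w. \<not> (E aa w \<and> E w cc)" and f2: "\<forall>w. \<not> (E bb w \<and> E w dd)" and f3: "\<forall>w. \<not> (E aa w \<and> E w dd)"
  and e1: "\<not> E aa cc" "\<not> E bb dd" "\<not> E aa dd"
  and dv: "aa \<noteq> bb" "aa \<noteq> cc" "aa \<noteq> dd" "bb \<noteq> cc" "bb \<noteq> dd" "cc \<noteq> dd"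
  and n1: "E aa bb \<or> (E aa uu \<and> E uu bb)" and n2: "E cc dd \<or> (E cc ww \<and> E ww dd)"
  shows "\<not> E bb cc"
  using p6[of aa uu bb cc ww dd] ban[of uu bb cc ww aa] sym irr f1 f2 f3 e1 dv n1 n2
  by (smt (z3))

lemma case_10001:
  fixes E :: "'a \<Rightarrow> 'a \<Rightarrow> bool" and D :: "'a set" and dm :: "'a \<Rightarrow> 'a"
  assumes sym: "\<forall>x y. E x y \<longrightarrow> E y x" and irr: "\<forall>x. \<not> E x x"
  and p6: "\<And>a b c d e f. \<not> (a \<noteq> b \<and> a \<noteq> c \<and> a \<noteq> d \<and> a \<noteq> e \<and> a \<noteq> f \<and> b \<noteq> c \<and> b \<noteq> d \<and> b \<noteq> e \<and> b \<noteq> f \<and> c \<noteq> d \<and> c \<noteq> e \<and> c \<noteq> f \<and> d \<noteq> e \<and> d \<noteq> f \<and> e \<noteq> f \<and> E a b \<and> E b c \<and> E c d \<and> E d e \<and> E e f \<and> \<not> E a c \<and> \<not> E a d \<and> \<not> E a e \<and> \<not> E a f \<and> \<not> E b d \<and> \<not> E b e \<and> \<not> E b f \<and> \<not> E c e \<and> \<not> E c f \<and> \<not> E d f)"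
  and ban: "\<And>a b c d e. \<not> (a \<noteq> b \<and> a \<noteq> c \<and> a \<noteq> d \<and> a \<noteq> e \<and> b \<noteq> c \<and> b \<noteq> d \<and> b \<noteq> e \<and> c \<noteq> d \<and> c \<noteq> e \<and> d \<noteq> e \<and> E a b \<and> E b c \<and> E c d \<and> E d a \<and> E a e \<and> \<not> E a c \<and> \<not> E b d \<and> \<not> E b e \<and> \<not> E c e \<and> \<not> E d e)"
  and dom: "\<And>x. x \<in> V \<Longrightarrow> dm x \<in> D \<and> (x = dm x \<or> E x (dm x))"
  and uniq: "\<And>x. x \<in> V \<Longrightarrow> \<forall>y. y \<in> D \<and> (x = y \<or> E x y) \<longrightarrow> y = dm x"
  and indep: "\<forall>x y. x \<in> D \<and> y \<in> D \<longrightarrow> \<not> E x y"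
  and inV: "pp0 \<in> V" "pp1 \<in> V" "pp2 \<in> V" "pp3 \<in> V" "pp4 \<in> V" "pp5 \<in> V" "qq1 \<in> V" "qq2 \<in> V" "qq3 \<in> V"
  and far: "\<forall>w. \<not> (E pp0 w \<and> E w pp2)" "\<forall>w. \<not> (E pp0 w \<and> E w pp3)" "\<forall>w. \<not> (E pp0 w \<and> E w pp4)" "\<forall>w. \<not> (E pp0 w \<and> E w pp5)" "\<forall>w. \<not> (E pp1 w \<and> E w pp3)" "\<forall>w. \<not> (E pp1 w \<and> E w pp4)" "\<forall>w. \<not> (E pp1 w \<and> E w pp5)" "\<forall>w. \<not> (E pp2 w \<and> E w pp4)" "\<forall>w. \<not> (E pp2 w \<and> E w pp5)" "\<forall>w. \<not> (E pp3 w \<and> E w pp5)"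
  and farE: "\<not> E pp0 pp2" "\<not> E pp0 pp3" "\<not> E pp0 pp4" "\<not> E pp0 pp5" "\<not> E pp1 pp3" "\<not> E pp1 pp4" "\<not> E pp1 pp5" "\<not> E pp2 pp4" "\<not> E pp2 pp5" "\<not> E pp3 pp5"
  and dv: "pp0 \<noteq> pp1" "pp0 \<noteq> pp2" "pp0 \<noteq> pp3" "pp0 \<noteq> pp4" "pp0 \<noteq> pp5" "pp1 \<noteq> pp2" "pp1 \<noteq> pp3" "pp1 \<noteq> pp4" "pp1 \<noteq> pp5" "pp2 \<noteq> pp3" "pp2 \<noteq> pp4" "pp2 \<noteq> pp5" "pp3 \<noteq> pp4" "pp3 \<noteq> pp5" "pp4 \<noteq> pp5"
  and pat: "E pp0 pp1" "\<not> E pp1 pp2" "E pp1 qq1" "E qq1 pp2" "\<not> E pp2 pp3" "E pp2 qq2" "E qq2 pp3" "\<not> E pp3 pp4" "E pp3 qq3" "E qq3 pp4" "E pp4 pp5"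
  shows False
proof -
  note d_pp0 = dom[OF inV(1)] uniq[OF inV(1)]
  note d_pp1 = dom[OF inV(2)] uniq[OF inV(2)]
  note d_pp2 = dom[OF inV(3)] uniq[OF inV(3)]
  note d_pp3 = dom[OF inV(4)] uniq[OF inV(4)]
  note d_pp4 = dom[OF inV(5)] uniq[OF inV(5)]
  note d_pp5 = dom[OF inV(6)] uniq[OF inV(6)]
  note d_qq1 = dom[OF inV(7)] uniq[OF inV(7)]
  note d_qq2 = dom[OF inV(8)] uniq[OF inV(8)]
  note d_qq3 = dom[OF inV(9)] uniq[OF inV(9)]
  show False
    using p6[of qq1 pp2 qq2 qq3 pp4 pp5] p6[of pp0 pp1 qq1 qq3 pp4 pp5] p6[of pp1 qq1 qq2 qq3 pp4 pp5] p6[of pp5 pp4 qq3 pp3 qq2 pp2]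
      sym irr d_pp0 d_pp1 d_pp2 d_pp3 d_pp4 d_pp5 d_qq1 d_qq2 d_qq3 indep far farE dv pat
    by (smt (z3))
qed

lemma case_10000:
  fixes E :: "'a \<Rightarrow> 'a \<Rightarrow> bool" and D :: "'a set" and dm :: "'a \<Rightarrow> 'a"
  assumes sym: "\<forall>x y. E x y \<longrightarrow> E y x" and irr: "\<forall>x. \<not> E x x"
  and p6: "\<And>a b c d e f. \<not> (a \<noteq> b \<and> a \<noteq> c \<and> a \<noteq> d \<and> a \<noteq> e \<and> a \<noteq> f \<and> b \<noteq> c \<and> b \<noteq> d \<and> b \<noteq> e \<and> b \<noteq> f \<and> c \<noteq> d \<and> c \<noteq> e \<and> c \<noteq> f \<and> d \<noteq> e \<and> d \<noteq> f \<and> e \<noteq> f \<and> E a b \<and> E b c \<and> E c d \<and> E d e \<and> E e f \<and> \<not> E a c \<and> \<not> E a d \<and> \<not> E a e \<and> \<not> E a f \<and> \<not> E b d \<and> \<not> E b e \<and> \<not> E b f \<and> \<not> E c e \<and> \<not> E c f \<and> \<not> E d f)"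
  and ban: "\<And>a b c d e. \<not> (a \<noteq> b \<and> a \<noteq> c \<and> a \<noteq> d \<and> a \<noteq> e \<and> b \<noteq> c \<and> b \<noteq> d \<and> b \<noteq> e \<and> c \<noteq> d \<and> c \<noteq> e \<and> d \<noteq> e \<and> E a b \<and> E b c \<and> E c d \<and> E d a \<and> E a e \<and> \<not> E a c \<and> \<not> E b d \<and> \<not> E b e \<and> \<not> E c e \<and> \<not> E d e)"
  and dom: "\<And>x. x \<in> V \<Longrightarrow> dm x \<in> D \<and> (x = dm x \<or> E x (dm x))"
  and uniq: "\<And>x. x \<in> V \<Longrightarrow> \<forall>y. y \<in> D \<and> (x = y \<or> E x y) \<longrightarrow> y = dm x"
  and indep: "\<forall>x y. x \<in> D \<and> y \<in> D \<longrightarrow> \<not> E x y"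
  and inV: "pp0 \<in> V" "pp1 \<in> V" "pp2 \<in> V" "pp3 \<in> V" "pp4 \<in> V" "pp5 \<in> V" "qq1 \<in> V" "qq2 \<in> V" "qq3 \<in> V" "qq4 \<in> V"
  and far: "\<forall>w. \<not> (E pp0 w \<and> E w pp2)" "\<forall>w. \<not> (E pp0 w \<and> E w pp3)" "\<forall>w. \<not> (E pp0 w \<and> E w pp4)" "\<forall>w. \<not> (E pp0 w \<and> E w pp5)" "\<forall>w. \<not> (E pp1 w \<and> E w pp3)" "\<forall>w. \<not> (E pp1 w \<and> E w pp4)" "\<forall>w. \<not> (E pp1 w \<and> E w pp5)" "\<forall>w. \<not> (E pp2 w \<and> E w pp4)" "\<forall>w. \<not> (E pp2 w \<and> E w pp5)" "\<forall>w. \<not> (E pp3 w \<and> E w pp5)"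
  and farE: "\<not> E pp0 pp2" "\<not> E pp0 pp3" "\<not> E pp0 pp4" "\<not> E pp0 pp5" "\<not> E pp1 pp3" "\<not> E pp1 pp4" "\<not> E pp1 pp5" "\<not> E pp2 pp4" "\<not> E pp2 pp5" "\<not> E pp3 pp5"
  and dv: "pp0 \<noteq> pp1" "pp0 \<noteq> pp2" "pp0 \<noteq> pp3" "pp0 \<noteq> pp4" "pp0 \<noteq> pp5" "pp1 \<noteq> pp2" "pp1 \<noteq> pp3" "pp1 \<noteq> pp4" "pp1 \<noteq> pp5" "pp2 \<noteq> pp3" "pp2 \<noteq> pp4" "pp2 \<noteq> pp5" "pp3 \<noteq> pp4" "pp3 \<noteq> pp5" "pp4 \<noteq> pp5"
  and pat: "E pp0 pp1" "\<not> E pp1 pp2" "E pp1 qq1" "E qq1 pp2" "\<not> E pp2 pp3" "E pp2 qq2" "E qq2 pp3" "\<not> E pp3 pp4" "E pp3 qq3" "E qq3 pp4" "\<not> E pp4 pp5" "E pp4 qq4" "E qq4 pp5"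
  shows False
proof -
  note d_pp0 = dom[OF inV(1)] uniq[OF inV(1)]
  note d_pp1 = dom[OF inV(2)] uniq[OF inV(2)]
  note d_pp2 = dom[OF inV(3)] uniq[OF inV(3)]
  note d_pp3 = dom[OF inV(4)] uniq[OF inV(4)]
  note d_pp4 = dom[OF inV(5)] uniq[OF inV(5)]
  note d_pp5 = dom[OF inV(6)] uniq[OF inV(6)]
  note d_qq1 = dom[OF inV(7)] uniq[OF inV(7)]
  note d_qq2 = dom[OF inV(8)] uniq[OF inV(8)]
  note d_qq3 = dom[OF inV(9)] uniq[OF inV(9)]
  note d_qq4 = dom[OF inV(10)] uniq[OF inV(10)]
  show False
    using ban[of qq1 qq2 pp3 "dm qq1" pp1] ban[of qq1 qq2 pp3 qq3 pp1] ban[of qq1 qq3 pp3 "dm qq1" pp1] ban[of qq1 qq3 pp4 "dm qq1" pp1] ban[of qq2 qq1 pp1 "dm qq2" pp3] ban[of qq2 pp2 "dm qq4" qq4 "dm qq1"] ban[of qq4 pp4 "dm qq3" qq2 "dm qq4"] p6[of "dm pp1" pp1 qq1 qq3 pp4 "dm pp4"] p6[of "dm pp2" pp2 qq2 qq4 pp5 "dm pp5"] p6[of qq2 pp2 "dm qq4" qq4 pp5 "dm pp5"] p6[of pp0 pp1 qq1 qq2 "dm qq3" pp4] p6[of pp0 pp1 qq1 qq2 qq3 pp4] p6[of pp0 pp1 qq1 qq2 pp3 "dm qq3"] p6[of pp0 pp1 qq1 qq2 pp3 "dm pp3"] p6[of pp0 pp1 qq1 qq3 pp3 "dm pp3"]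 p6[of pp0 pp1 qq1 qq3 pp4 "dm pp4"] p6[of pp0 pp1 qq1 pp2 qq2 pp3] p6[of pp2 qq2 "dm qq3" pp4 qq4 "dm qq4"] p6[of pp2 qq2 qq3 qq4 pp5 "dm pp5"] p6[of pp2 qq2 qq3 pp4 qq4 pp5] p6[of pp3 qq2 qq1 pp1 pp0 "dm pp0"] p6[of pp3 qq2 pp2 qq1 pp1 pp0] p6[of pp4 qq3 qq2 qq1 pp1 "dm pp1"] p6[of pp4 qq3 pp3 qq2 qq1 pp1]
      sym irr d_pp0 d_pp1 d_pp2 d_pp3 d_pp4 d_pp5 d_qq1 d_qq2 d_qq3 d_qq4 indep far farE dv pat
    by (smt (z3))
qed

lemma case_00001:
  fixes E :: "'a \<Rightarrow> 'a \<Rightarrow> bool" and D :: "'a set" and dm :: "'a \<Rightarrow> 'a"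
  assumes sym: "\<forall>x y. E x y \<longrightarrow> E y x" and irr: "\<forall>x. \<not> E x x"
  and p6: "\<And>a b c d e f. \<not> (a \<noteq> b \<and> a \<noteq> c \<and> a \<noteq> d \<and> a \<noteq> e \<and> a \<noteq> f \<and> b \<noteq> c \<and> b \<noteq> d \<and> b \<noteq> e \<and> b \<noteq> f \<and> c \<noteq> d \<and> c \<noteq> e \<and> c \<noteq> f \<and> d \<noteq> e \<and> d \<noteq> f \<and> e \<noteq> f \<and> E a b \<and> E b c \<and> E c d \<and> E d e \<and> E e f \<and> \<not> E a c \<and> \<not> E a d \<and> \<not> E a e \<and> \<not> E a f \<and> \<not> E b d \<and> \<not> E b e \<and> \<not> E b f \<and> \<not> E c e \<and> \<not> E c f \<and> \<not> E d f)"
  and ban: "\<And>a b c d e. \<not> (a \<noteq> b \<and> a \<noteq> c \<and> a \<noteq> d \<and> a \<noteq> e \<and> b \<noteq> c \<and> b \<noteq> d \<and> b \<noteq> e \<and> c \<noteq> d \<and> c \<noteq> e \<and> d \<noteq> e \<and> E a b \<and> E b c \<and> E c d \<and> E d a \<and> E a e \<and> \<not> E a c \<and> \<not> E b d \<and> \<not> E b e \<and> \<not> E c e \<and> \<not> E d e)"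
  and dom: "\<And>x. x \<in> V \<Longrightarrow> dm x \<in> D \<and> (x = dm x \<or> E x (dm x))"
  and uniq: "\<And>x. x \<in> V \<Longrightarrow> \<forall>y. y \<in> D \<and> (x = y \<or> E x y) \<longrightarrow> y = dm x"
  and indep: "\<forall>x y. x \<in> D \<and> y \<in> D \<longrightarrow> \<not> E x y"
  and inV: "pp0 \<in> V" "pp1 \<in> V" "pp2 \<in> V" "pp3 \<in> V" "pp4 \<in> V" "pp5 \<in> V" "qq0 \<in> V" "qq1 \<in> V" "qq2 \<in> V" "qq3 \<in> V"
  and far: "\<forall>w. \<not> (E pp0 w \<and> E w pp2)" "\<forall>w. \<not> (E pp0 w \<and> E w pp3)" "\<forall>w. \<not> (E pp0 w \<and> E w pp4)" "\<forall>w. \<not> (E pp0 w \<and> E w pp5)" "\<forall>w. \<not> (E pp1 w \<and> E w pp3)" "\<forall>w. \<not> (E pp1 w \<and> E w pp4)" "\<forall>w. \<not> (E pp1 w \<and> E w pp5)" "\<forall>w. \<not> (E pp2 w \<and> E w pp4)" "\<forall>w. \<not> (E pp2 w \<and> E w pp5)" "\<forall>w. \<not> (E pp3 w \<and> E w pp5)"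
  and farE: "\<not> E pp0 pp2" "\<not> E pp0 pp3" "\<not> E pp0 pp4" "\<not> E pp0 pp5" "\<not> E pp1 pp3" "\<not> E pp1 pp4" "\<not> E pp1 pp5" "\<not> E pp2 pp4" "\<not> E pp2 pp5" "\<not> E pp3 pp5"
  and dv: "pp0 \<noteq> pp1" "pp0 \<noteq> pp2" "pp0 \<noteq> pp3" "pp0 \<noteq> pp4" "pp0 \<noteq> pp5" "pp1 \<noteq> pp2" "pp1 \<noteq> pp3" "pp1 \<noteq> pp4" "pp1 \<noteq> pp5" "pp2 \<noteq> pp3" "pp2 \<noteq> pp4" "pp2 \<noteq> pp5" "pp3 \<noteq> pp4" "pp3 \<noteq> pp5" "pp4 \<noteq> pp5"
  and pat: "\<not> E pp0 pp1" "E pp0 qq0" "E qq0 pp1" "\<not> E pp1 pp2" "E pp1 qq1" "E qq1 pp2" "\<not> E pp2 pp3" "E pp2 qq2" "E qq2 pp3" "\<not> E pp3 pp4" "E pp3 qq3" "E qq3 pp4" "E pp4 pp5"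
  shows False
proof -
  note d_pp0 = dom[OF inV(1)] uniq[OF inV(1)]
  note d_pp1 = dom[OF inV(2)] uniq[OF inV(2)]
  note d_pp2 = dom[OF inV(3)] uniq[OF inV(3)]
  note d_pp3 = dom[OF inV(4)] uniq[OF inV(4)]
  note d_pp4 = dom[OF inV(5)] uniq[OF inV(5)]
  note d_pp5 = dom[OF inV(6)] uniq[OF inV(6)]
  note d_qq0 = dom[OF inV(7)] uniq[OF inV(7)]
  note d_qq1 = dom[OF inV(8)] uniq[OF inV(8)]
  note d_qq2 = dom[OF inV(9)] uniq[OF inV(9)]
  note d_qq3 = dom[OF inV(10)] uniq[OF inV(10)]
  show False
    using ban[of "dm qq0" qq0 qq1 pp2 pp3] ban[of qq2 qq0 "dm qq0" pp3 "dm qq2"] ban[of qq2 qq0 pp1 "dm qq1" pp3] ban[of qq2 qq0 pp1 qq1 pp3] ban[of qq2 pp1 qq1 pp2 pp3] ban[of qq2 pp3 "dm qq1" pp2 "dm qq2"] ban[of qq2 pp3 "dm pp3" pp2 "dm qq2"] ban[of qq3 "dm qq3" pp1 qq1 pp4] ban[of qq3 qq1 pp2 "dm qq2" pp4] ban[of qq3 qq1 pp2 qq2 pp4] ban[of qq3 qq2 pp2 "dm qq3" pp4] ban[of qq3 pp4 pp5 qq1 pp3] ban[of pp4 qq3 qq2 "dm qq2" pp5] ban[of pp4 qq3 qq2 pp2 pp5] ban[of pp5 qq1 qq2 pp3 pp4] p6[of "dm pp0" pp0 qq0 qq2 pp3 "dm pp3"] p6[of "dm pp1" pp1 qq1 qq3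 pp4 pp5] p6[of pp0 qq0 "dm qq0" pp3 qq2 pp2] p6[of pp0 qq0 qq1 qq2 pp3 "dm pp3"] p6[of pp0 qq0 qq1 pp2 "dm qq2" pp3] p6[of pp0 qq0 qq1 pp2 "dm pp3" pp3] p6[of pp0 qq0 pp1 qq1 qq2 pp3] p6[of pp1 qq1 qq2 qq3 pp4 pp5] p6[of pp2 qq2 pp3 qq3 pp4 pp5] p6[of pp3 qq3 pp4 pp1 qq1 pp2] p6[of pp3 qq3 pp4 pp5 pp2 "dm pp2"] p6[of pp4 qq3 qq2 pp2 qq1 pp1] p6[of pp4 qq3 pp3 qq2 pp2 qq1] p6[of pp5 pp4 qq3 qq1 pp2 "dm qq2"] p6[of pp5 pp4 qq3 qq2 pp2 "dm pp2"]
      sym irr d_pp0 d_pp1 d_pp2 d_pp3 d_pp4 d_pp5 d_qq0 d_qq1 d_qq2 d_qq3 indep far farE dv pat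
    by (smt (z3))
qed

lemma case_00000:
  fixes E :: "'a \<Rightarrow> 'a \<Rightarrow> bool" and D :: "'a set" and dm :: "'a \<Rightarrow> 'a"
  assumes sym: "\<forall>x y. E x y \<longrightarrow> E y x" and irr: "\<forall>x. \<not> E x x"
  and p6: "\<And>a b c d e f. \<not> (a \<noteq> b \<and> a \<noteq> c \<and> a \<noteq> d \<and> a \<noteq> e \<and> a \<noteq> f \<and> b \<noteq> c \<and> b \<noteq> d \<and> b \<noteq> e \<and> b \<noteq> f \<and> c \<noteq> d \<and> c \<noteq> e \<and> c \<noteq> f \<and> d \<noteq> e \<and> d \<noteq> f \<and> e \<noteq> f \<and> E a b \<and> E b c \<and> E c d \<and> E d e \<and> E e f \<and> \<not> E a c \<and> \<not> E a d \<and> \<not> E a e \<and> \<not> E a f \<and> \<not> E b d \<and> \<not> E b e \<and> \<not> E b f \<and> \<not> E c e \<and> \<not> E c f \<and> \<not> E d f)"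
  and ban: "\<And>a b c d e. \<not> (a \<noteq> b \<and> a \<noteq> c \<and> a \<noteq> d \<and> a \<noteq> e \<and> b \<noteq> c \<and> b \<noteq> d \<and> b \<noteq> e \<and> c \<noteq> d \<and> c \<noteq> e \<and> d \<noteq> e \<and> E a b \<and> E b c \<and> E c d \<and> E d a \<and> E a e \<and> \<not> E a c \<and> \<not> E b d \<and> \<not> E b e \<and> \<not> E c e \<and> \<not> E d e)"
  and dom: "\<And>x. x \<in> V \<Longrightarrow> dm x \<in> D \<and> (x = dm x \<or> E x (dm x))"
  and uniq: "\<And>x. x \<in> V \<Longrightarrow> \<forall>y. y \<in> D \<and> (x = y \<or> E x y) \<longrightarrow> y = dm x"
  and indep: "\<forall>x y. x \<in> D \<and> y \<in> D \<longrightarrow> \<not> E x y"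
  and inV: "pp0 \<in> V" "pp1 \<in> V" "pp2 \<in> V" "pp3 \<in> V" "pp4 \<in> V" "pp5 \<in> V" "qq0 \<in> V" "qq1 \<in> V" "qq2 \<in> V" "qq3 \<in> V" "qq4 \<in> V"
  and far: "\<forall>w. \<not> (E pp0 w \<and> E w pp2)" "\<forall>w. \<not> (E pp0 w \<and> E w pp3)" "\<forall>w. \<not> (E pp0 w \<and> E w pp4)" "\<forall>w. \<not> (E pp0 w \<and> E w pp5)" "\<forall>w. \<not> (E pp1 w \<and> E w pp3)" "\<forall>w. \<not> (E pp1 w \<and> E w pp4)" "\<forall>w. \<not> (E pp1 w \<and> E w pp5)" "\<forall>w. \<not> (E pp2 w \<and> E w pp4)" "\<forall>w. \<not> (E pp2 w \<and> E w pp5)" "\<forall>w. \<not> (E pp3 w \<and> E w pp5)"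
  and farE: "\<not> E pp0 pp2" "\<not> E pp0 pp3" "\<not> E pp0 pp4" "\<not> E pp0 pp5" "\<not> E pp1 pp3" "\<not> E pp1 pp4" "\<not> E pp1 pp5" "\<not> E pp2 pp4" "\<not> E pp2 pp5" "\<not> E pp3 pp5"
  and dv: "pp0 \<noteq> pp1" "pp0 \<noteq> pp2" "pp0 \<noteq> pp3" "pp0 \<noteq> pp4" "pp0 \<noteq> pp5" "pp1 \<noteq> pp2" "pp1 \<noteq> pp3" "pp1 \<noteq> pp4" "pp1 \<noteq> pp5" "pp2 \<noteq> pp3" "pp2 \<noteq> pp4" "pp2 \<noteq> pp5" "pp3 \<noteq> pp4" "pp3 \<noteq> pp5" "pp4 \<noteq> pp5"
  and pat: "\<not> E pp0 pp1" "E pp0 qq0" "E qq0 pp1" "\<not> E pp1 pp2" "E pp1 qq1" "E qq1 pp2" "\<not> E pp2 pp3" "E pp2 qq2" "E qq2 pp3" "\<not> E pp3 pp4" "E pp3 qq3" "E qq3 pp4" "\<not> E pp4 pp5" "E pp4 qq4" "E qq4 pp5"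
  shows False
proof -
  note d_pp0 = dom[OF inV(1)] uniq[OF inV(1)]
  note d_pp1 = dom[OF inV(2)] uniq[OF inV(2)]
  note d_pp2 = dom[OF inV(3)] uniq[OF inV(3)]
  note d_pp3 = dom[OF inV(4)] uniq[OF inV(4)]
  note d_pp4 = dom[OF inV(5)] uniq[OF inV(5)]
  note d_pp5 = dom[OF inV(6)] uniq[OF inV(6)]
  note d_qq0 = dom[OF inV(7)] uniq[OF inV(7)]
  note d_qq1 = dom[OF inV(8)] uniq[OF inV(8)]
  note d_qq2 = dom[OF inV(9)] uniq[OF inV(9)]
  note d_qq3 = dom[OF inV(10)] uniq[OF inV(10)]
  note d_qq4 = dom[OF inV(11)] uniq[OF inV(11)]
  show False
    using ban[of "dm qq1" qq0 qq3 pp3 pp2] ban[of "dm qq2" pp0 qq0 pp1 qq2] ban[of "dm qq3" pp2 qq1 pp1 qq3] ban[of "dm qq4" pp3 qq2 pp2 qq4] ban[of "dm pp3" pp3 qq3 qq0 pp2] ban[of "dm pp3" pp3 qq3 qq4 pp2] ban[of qq0 qq2 pp3 "dm qq0" pp1] ban[of qq0 qq2 pp3 pp0 pp1] ban[of qq0 qq3 qq2 qq1 pp0] ban[of qq1 "dm qq1" pp0 qq0 pp2] ban[of qq1 "dm qq1" pp3 qq3 pp2] ban[of qq1 qq0 pp0 qq3 pp2] ban[of qq1 qq2 pp3 "dm qq1" pp1] ban[of qq1 qq3 pp4 "dm qq1" pp1] ban[of qq1 qq3 pp4 qq0 "dm qq1"] ban[of qq1 pp1 qq0 qq3 pp2]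 ban[of qq1 pp2 "dm pp3" qq0 "dm qq1"] ban[of qq2 "dm qq2" pp0 qq0 pp3] ban[of qq2 "dm qq3" pp4 qq0 pp2] ban[of qq2 "dm pp3" pp1 qq1 qq3] ban[of qq2 qq0 "dm qq0" pp2 pp3] ban[of qq2 qq0 "dm qq1" pp2 pp3] ban[of qq2 qq0 qq1 pp2 pp3] ban[of qq2 qq0 pp1 "dm qq1" pp3] ban[of qq2 qq0 pp1 "dm qq2" pp3] ban[of qq2 qq1 pp1 "dm qq2" pp3] ban[of qq2 qq1 pp1 qq0 pp3] ban[of qq2 qq3 pp4 "dm qq2" qq1] ban[of qq2 qq3 pp4 "dm pp3" qq1] ban[of qq2 pp2 "dm pp2" pp3 "dm qq1"] ban[of qq2 pp3 "dm pp3" "dm qq2" qq1] ban[of qq2 pp3 "dm pp3" pp2 qq0] ban[of qq2 pp3 "dm pp3" pp2 qq4] ban[of qq3 "dm qq3" pp2 qq2 pp4] ban[of qq3 qq0 pp1 "dm qq1" pp4] ban[of qq3 qq1 qq2 pp3 pp4] ban[of qq3 qq1 pp1 "dm qq3" pp4] ban[of qq3 qq2 pp2 "dm qq3" pp4] ban[of qq3 pp3 "dm pp3" qq1 pp4] ban[of qq4 "dm qq4" pp2 qq2 pp5] ban[of qq4 "dm qq4" pp3 qq3 pp5] ban[of qq4 "dm pp3" pp3 qq3 pp5] ban[of qq4 qq2 "dm qq3" pp4 pp5] ban[of qq4 qq2 qq3 pp4 pp5] ban[of qq4 qq2 pp3 "dm qq4" pp5] ban[of pp1 qq1 pp2 "dm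 pp1" qq0] p6[of "dm qq1" pp1 qq0 qq2 pp2 "dm pp2"] p6[of "dm qq1" pp1 qq0 qq2 pp3 "dm qq3"] p6[of "dm qq1" pp1 qq0 qq2 pp3 "dm pp3"] p6[of "dm qq1" pp1 qq0 qq3 pp3 "dm pp3"] p6[of "dm qq1" pp1 qq0 qq3 pp4 "dm pp4"] p6[of "dm qq3" pp4 qq4 qq2 pp2 "dm pp2"] p6[of "dm pp0" pp0 qq0 "dm qq0" pp3 qq2] p6[of "dm pp0" pp0 qq0 qq1 qq2 pp3] p6[of "dm pp0" pp0 qq0 qq2 "dm pp3" pp4] p6[of "dm pp0" pp0 qq0 qq2 pp2 "dm pp2"] p6[of "dm pp0" pp0 qq0 qq2 pp3 "dm pp3"] p6[of "dm pp1" pp1 qq0 qq2 qq3 pp4] p6[of "dm pp1" pp1 qq0 qq2 pp3 "dm pp3"] p6[of "dm pp1" pp1 qq1 qq2 pp3 "dm pp3"] p6[of "dm pp1" pp1 qq1 qq3 pp3 "dm pp3"] p6[of "dm pp1" pp1 qq1 qq3 pp4 "dm pp4"] p6[of "dm pp3" pp3 qq3 qq1 pp2 "dm qq2"] p6[of "dm pp3" pp3 qq3 qq1 pp2 "dm pp2"] p6[of "dm pp5" pp5 qq4 qq2 pp2 "dm pp2"] p6[of "dm pp5" pp5 qq4 qq3 pp3 "dm pp3"] p6[of qq0 pp1 qq1 pp2 "dm pp3" pp3] p6[of qq0 pp1 qq1 pp2 qq2 pp3] p6[of qq3 pp3 "dm pp3" pp2 qq1 pp1] p6[of pp0 "dm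 qq0" qq1 qq2 "dm qq3" pp4] p6[of pp0 "dm qq0" qq1 qq2 qq3 pp4] p6[of pp0 "dm qq0" qq1 qq2 pp3 "dm qq3"] p6[of pp0 "dm qq0" qq1 qq2 pp3 "dm pp3"] p6[of pp0 "dm qq0" qq1 qq3 pp3 "dm pp3"] p6[of pp0 "dm qq0" qq1 qq3 pp4 "dm pp4"] p6[of pp0 "dm pp0" qq1 pp2 "dm pp3" pp3] p6[of pp0 qq0 "dm pp3" pp2 qq1 "dm qq1"] p6[of pp0 qq0 qq1 qq2 "dm qq3" pp4] p6[of pp0 qq0 qq1 qq2 qq3 pp4] p6[of pp0 qq0 qq1 qq2 pp3 "dm pp3"] p6[of pp0 qq0 qq1 qq3 pp3 "dm pp3"] p6[of pp0 qq0 qq1 qq3 pp4 "dm pp4"] p6[of pp0 qq0 qq1 pp2 "dm pp3" pp3] p6[of pp0 qq0 qq1 pp2 qq2 pp3] p6[of pp0 qq0 qq2 pp3 "dm qq3" pp4] p6[of pp0 qq0 pp1 "dm qq1" "dm pp3" pp3] p6[of pp0 qq0 pp1 qq1 qq2 pp3] p6[of pp0 qq0 pp1 qq1 qq3 pp4] p6[of pp1 "dm qq1" qq3 qq2 pp2 "dm pp2"] p6[of pp1 qq0 pp0 "dm qq2" qq2 pp3] p6[of pp1 qq1 qq2 qq3 "dm qq4" pp5] p6[of pp1 qq1 qq2 qq3 pp4 "dm pp4"] p6[of pp1 qq1 qq2 pp3 "dm pp3" "dm pp2"] p6[of pp2 qq1 qq0 qq3 pp3 "dm qq2"] p6[of pp3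 qq2 qq0 pp0 "dm pp0" "dm pp2"] p6[of pp3 qq2 qq0 pp1 "dm qq1" "dm pp2"] p6[of pp3 qq2 qq4 pp5 "dm pp5" "dm pp2"] p6[of pp3 qq2 pp2 qq1 pp1 "dm pp1"] p6[of pp3 qq3 "dm qq3" pp1 qq1 pp2] p6[of pp3 qq3 qq0 pp1 "dm qq1" pp2] p6[of pp3 qq3 qq4 pp5 "dm pp5" pp2] p6[of pp4 "dm qq3" qq2 qq0 pp1 "dm pp1"] p6[of pp4 qq3 "dm pp3" pp2 qq1 pp1] p6[of pp4 qq3 qq2 qq0 pp1 "dm qq1"] p6[of pp4 qq3 qq2 qq1 "dm qq1" "dm pp3"] p6[of pp4 qq3 qq2 qq1 pp1 "dm pp1"] p6[of pp4 qq3 qq2 pp2 "dm qq1" pp1] p6[of pp4 qq3 qq2 pp2 qq1 pp1] p6[of pp4 qq3 pp3 "dm pp3" qq1 pp1] p6[of pp4 qq3 pp3 qq2 qq1 pp1] p6[of pp4 qq3 pp3 qq2 pp2 qq1] p6[of pp5 qq4 "dm qq4" pp2 qq2 pp3] p6[of pp5 qq4 qq3 qq2 pp2 "dm pp2"] p6[of pp5 qq4 qq3 pp3 "dm pp3" "dm pp2"] p6[of pp5 qq4 qq3 pp3 "dm pp3" pp2] p6[of pp5 qq4 pp4 qq3 qq2 pp2]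
      sym irr d_pp0 d_pp1 d_pp2 d_pp3 d_pp4 d_pp5 d_qq0 d_qq1 d_qq2 d_qq3 d_qq4 indep far farE dv pat
    by (smt (z3))
qed

theorem theorem1:
  fixes V :: "'a set" and E :: "'a \<Rightarrow> 'a \<Rightarrow> bool"
  assumes "simple_graph V E"
    and "P_free 6 V E"
    and "banner_free V E"
    and "\<exists>D. efficient_dominating_set V E D"
  shows "P_free 6 V (square E)"
proof -
  have sg: "simple_graph V E" by (rule assms(1))
  have sym: "\<forall>x y. E x y \<longrightarrow> E y x" and irr: "\<forall>x. \<not> E x x"
    and ev: "\<And>x y. E x y \<Longrightarrow> x \<in> V" "\<And>x y. E x y \<Longrightarrow> y \<in> V"
    using sg by (auto simp: simple_graph_def)
  note p6 = p6_rule[OF assms(1) assms(2)]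
  note ban = ban_rule[OF assms(1) assms(3)]
  obtain D where ed: "efficient_dominating_set V E D" using assms(4) by blast
  define dm where "dm = (\<lambda>x. SOME d. d \<in> D \<and> (x = d \<or> E x d))"
  have dom: "\<And>x. x \<in> V \<Longrightarrow> dm x \<in> D \<and> (x = dm x \<or> E x (dm x))"
  proof -
    fix x assume x: "x \<in> V"
    have "\<exists>d. d \<in> D \<and> (x = d \<or> E x d)"
    proof (cases "x \<in> D")
      case True thus ?thesis by blast
    next
      case False with x ed show ?thesis unfolding efficient_dominating_set_def by blast
    qed
    thus "dm x \<in> D \<and> (x = dm x \<or> E x (dm x))" unfolding dm_def by (rule someI_ex)
  qed
  have uniq: "\<And>x. x \<in> V \<Longrightarrow> \<forall>y. y \<in> D \<and> (x = y \<or> E x y) \<longrightarrow> y = dm x"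
  proof (intro allI impI)
    fix x y assume x: "x \<in> V" and y: "y \<in> D \<and> (x = y \<or> E x y)"
    from dom[OF x] have d: "dm x \<in> D \<and> (x = dm x \<or> E x (dm x))" .
    show "y = dm x"
    proof (cases "x \<in> D")
      case True
      then have "y = x" using y ed by (auto simp: efficient_dominating_set_def)
      moreover have "dm x = x" using d True ed by (auto simp: efficient_dominating_set_def)
      ultimately show ?thesis by simp
    next
      case False
      then have "E x y" "E x (dm x)" using y d by auto
      moreover have "\<exists>!d. d \<in> D \<and> E x d" using ed x False unfolding efficient_dominating_set_def by blast
      ultimately show ?thesis using y d by blast
    qed
  qed
  have indep: "\<forall>x y. x \<in> D \<and> y \<in> D \<longrightarrow> \<not> E x y"
    using ed by (auto simp: efficient_dominating_set_def)
  show ?thesis unfolding P_free_def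
  proof
    assume "has_induced V (square E) (path_verts 6) path_adj"
    then obtain f where inj: "inj_on f (path_verts 6)" and sub: "f ` path_verts 6 \<subseteq> V"
      and adj: "\<forall>x\<in>path_verts 6. \<forall>y\<in>path_verts 6. square E (f x) (f y) = path_adj x y"
      unfolding has_induced_def by blast
    have injf: "\<And>i j. i < 6 \<Longrightarrow> j < 6 \<Longrightarrow> f i = f j \<Longrightarrow> i = j"
      using inj by (auto simp: inj_on_def path_verts_def)
    have sq: "\<And>i j. i < 6 \<Longrightarrow> j < 6 \<Longrightarrow> square E (f i) (f j) = path_adj i j"
      using adj by (auto simp: path_verts_def)
    have fV: "\<And>i. i < 6 \<Longrightarrow> f i \<in> V" using sub by (auto simp: path_verts_def)
    define pp0 where "pp0 = f 0"
    define pp1 where "pp1 = f 1"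
    define pp2 where "pp2 = f 2"
    define pp3 where "pp3 = f 3"
    define pp4 where "pp4 = f 4"
    define pp5 where "pp5 = f 5"
    have inV0: "pp0 \<in> V" using fV[of 0] by (simp add: pp0_def)
    have inV1: "pp1 \<in> V" using fV[of 1] by (simp add: pp1_def)
    have inV2: "pp2 \<in> V" using fV[of 2] by (simp add: pp2_def)
    have inV3: "pp3 \<in> V" using fV[of 3] by (simp add: pp3_def)
    have inV4: "pp4 \<in> V" using fV[of 4] by (simp add: pp4_def)
    have inV5: "pp5 \<in> V" using fV[of 5] by (simp add: pp5_def)
    have dv01: "pp0 \<noteq> pp1" using injf[of 0 1] by (auto simp: pp0_def pp1_def)
    have dv02: "pp0 \<noteq> pp2" using injf[of 0 2] by (auto simp: pp0_def pp2_def)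
    have dv03: "pp0 \<noteq> pp3" using injf[of 0 3] by (auto simp: pp0_def pp3_def)
    have dv04: "pp0 \<noteq> pp4" using injf[of 0 4] by (auto simp: pp0_def pp4_def)
    have dv05: "pp0 \<noteq> pp5" using injf[of 0 5] by (auto simp: pp0_def pp5_def)
    have dv12: "pp1 \<noteq> pp2" using injf[of 1 2] by (auto simp: pp1_def pp2_def)
    have dv13: "pp1 \<noteq> pp3" using injf[of 1 3] by (auto simp: pp1_def pp3_def)
    have dv14: "pp1 \<noteq> pp4" using injf[of 1 4] by (auto simp: pp1_def pp4_def)
    have dv15: "pp1 \<noteq> pp5" using injf[of 1 5] by (auto simp: pp1_def pp5_def)
    have dv23: "pp2 \<noteq> pp3" using injf[of 2 3] by (auto simp: pp2_def pp3_def)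
    have dv24: "pp2 \<noteq> pp4" using injf[of 2 4] by (auto simp: pp2_def pp4_def)
    have dv25: "pp2 \<noteq> pp5" using injf[of 2 5] by (auto simp: pp2_def pp5_def)
    have dv34: "pp3 \<noteq> pp4" using injf[of 3 4] by (auto simp: pp3_def pp4_def)
    have dv35: "pp3 \<noteq> pp5" using injf[of 3 5] by (auto simp: pp3_def pp5_def)
    have dv45: "pp4 \<noteq> pp5" using injf[of 4 5] by (auto simp: pp4_def pp5_def)
    have "square E pp0 pp1" unfolding pp0_def pp1_def by (subst sq) (simp_all add: path_adj_def)
    then have "E pp0 pp1 \<or> (\<exists>w. E pp0 w \<and> E w pp1)" by (rule sq_near)
    then obtain qq0 where n0: "E pp0 pp1 \<or> (E pp0 qq0 \<and> E qq0 pp1)" by blast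
    have "square E pp1 pp2" unfolding pp1_def pp2_def by (subst sq) (simp_all add: path_adj_def)
    then have "E pp1 pp2 \<or> (\<exists>w. E pp1 w \<and> E w pp2)" by (rule sq_near)
    then obtain qq1 where n1: "E pp1 pp2 \<or> (E pp1 qq1 \<and> E qq1 pp2)" by blast
    have "square E pp2 pp3" unfolding pp2_def pp3_def by (subst sq) (simp_all add: path_adj_def)
    then have "E pp2 pp3 \<or> (\<exists>w. E pp2 w \<and> E w pp3)" by (rule sq_near)
    then obtain qq2 where n2: "E pp2 pp3 \<or> (E pp2 qq2 \<and> E qq2 pp3)" by blast
    have "square E pp3 pp4" unfolding pp3_def pp4_def by (subst sq) (simp_all add: path_adj_def)
    then have "E pp3 pp4 \<or> (\<exists>w. E pp3 w \<and> E w pp4)" by (rule sq_near)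
    then obtain qq3 where n3: "E pp3 pp4 \<or> (E pp3 qq3 \<and> E qq3 pp4)" by blast
    have "square E pp4 pp5" unfolding pp4_def pp5_def by (subst sq) (simp_all add: path_adj_def)
    then have "E pp4 pp5 \<or> (\<exists>w. E pp4 w \<and> E w pp5)" by (rule sq_near)
    then obtain qq4 where n4: "E pp4 pp5 \<or> (E pp4 qq4 \<and> E qq4 pp5)" by blast
    have "\<not> square E pp0 pp2" unfolding pp0_def pp2_def by (subst sq) (simp_all add: path_adj_def)
    note sf02 = sq_far[OF this dv02]
    have far02: "\<forall>w. \<not> (E pp0 w \<and> E w pp2)" by (rule conjunct2[OF sf02])
    have farE02: "\<not> E pp0 pp2" by (rule conjunct1[OF sf02])
    have "\<not> square E pp0 pp3" unfolding pp0_def pp3_def by (subst sq) (simp_all add: path_adj_def)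
    note sf03 = sq_far[OF this dv03]
    have far03: "\<forall>w. \<not> (E pp0 w \<and> E w pp3)" by (rule conjunct2[OF sf03])
    have farE03: "\<not> E pp0 pp3" by (rule conjunct1[OF sf03])
    have "\<not> square E pp0 pp4" unfolding pp0_def pp4_def by (subst sq) (simp_all add: path_adj_def)
    note sf04 = sq_far[OF this dv04]
    have far04: "\<forall>w. \<not> (E pp0 w \<and> E w pp4)" by (rule conjunct2[OF sf04])
    have farE04: "\<not> E pp0 pp4" by (rule conjunct1[OF sf04])
    have "\<not> square E pp0 pp5" unfolding pp0_def pp5_def by (subst sq) (simp_all add: path_adj_def)
    note sf05 = sq_far[OF this dv05]
    have far05: "\<forall>w. \<not> (E pp0 w \<and> E w pp5)" by (rule conjunct2[OF sf05])
    have farE05: "\<not> E pp0 pp5" by (rule conjunct1[OF sf05])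
    have "\<not> square E pp1 pp3" unfolding pp1_def pp3_def by (subst sq) (simp_all add: path_adj_def)
    note sf13 = sq_far[OF this dv13]
    have far13: "\<forall>w. \<not> (E pp1 w \<and> E w pp3)" by (rule conjunct2[OF sf13])
    have farE13: "\<not> E pp1 pp3" by (rule conjunct1[OF sf13])
    have "\<not> square E pp1 pp4" unfolding pp1_def pp4_def by (subst sq) (simp_all add: path_adj_def)
    note sf14 = sq_far[OF this dv14]
    have far14: "\<forall>w. \<not> (E pp1 w \<and> E w pp4)" by (rule conjunct2[OF sf14])
    have farE14: "\<not> E pp1 pp4" by (rule conjunct1[OF sf14])
    have "\<not> square E pp1 pp5" unfolding pp1_def pp5_def by (subst sq) (simp_all add: path_adj_def)
    note sf15 = sq_far[OF this dv15]
    have far15: "\<forall>w. \<not> (E pp1 w \<and> E w pp5)" by (rule conjunct2[OF sf15])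
    have farE15: "\<not> E pp1 pp5" by (rule conjunct1[OF sf15])
    have "\<not> square E pp2 pp4" unfolding pp2_def pp4_def by (subst sq) (simp_all add: path_adj_def)
    note sf24 = sq_far[OF this dv24]
    have far24: "\<forall>w. \<not> (E pp2 w \<and> E w pp4)" by (rule conjunct2[OF sf24])
    have farE24: "\<not> E pp2 pp4" by (rule conjunct1[OF sf24])
    have "\<not> square E pp2 pp5" unfolding pp2_def pp5_def by (subst sq) (simp_all add: path_adj_def)
    note sf25 = sq_far[OF this dv25]
    have far25: "\<forall>w. \<not> (E pp2 w \<and> E w pp5)" by (rule conjunct2[OF sf25])
    have farE25: "\<not> E pp2 pp5" by (rule conjunct1[OF sf25])
    have "\<not> square E pp3 pp5" unfolding pp3_def pp5_def by (subst sq) (simp_all add: path_adj_def)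
    note sf35 = sq_far[OF this dv35]
    have far35: "\<forall>w. \<not> (E pp3 w \<and> E w pp5)" by (rule conjunct2[OF sf35])
    have farE35: "\<not> E pp3 pp5" by (rule conjunct1[OF sf35])
    have ne1: "\<not> E pp1 pp2" by (rule midM[OF sym irr p6 ban far02 far13 far03 farE02 farE13 farE03 dv01 dv02 dv03 dv12 dv13 dv23 n0 n2])
    have m1: "E pp1 qq1" "E qq1 pp2" using n1 ne1 by auto
    have ne2: "\<not> E pp2 pp3" by (rule midM[OF sym irr p6 ban far13 far24 far14 farE13 farE24 farE14 dv12 dv13 dv14 dv23 dv24 dv34 n1 n3])
    have m2: "E pp2 qq2" "E qq2 pp3" using n2 ne2 by auto
    have ne3: "\<not> E pp3 pp4" by (rule midM[OF sym irr p6 ban far24 far35 far25 farE24 farE35 farE25 dv23 dv24 dv25 dv34 dv35 dv45 n2 n4])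
    have m3: "E pp3 qq3" "E qq3 pp4" using n3 ne3 by auto
    show False
    proof (cases "E pp0 pp1")
      case True
      show False
      proof (cases "E pp4 pp5")
        case True
        have e0: "E pp0 pp1" by fact
        have e4: "E pp4 pp5" by fact
        have iq1: "qq1 \<in> V" using m1 ev by blast
        have iq2: "qq2 \<in> V" using m2 ev by blast
        have iq3: "qq3 \<in> V" using m3 ev by blast
        show False by (rule case_10001[OF sym irr p6 ban dom uniq indep inV0 inV1 inV2 inV3 inV4 inV5 iq1 iq2 iq3 far02 far03 far04 far05 far13 far14 far15 far24 far25 far35 farE02 farE03 farE04 farE05 farE13 farE14 farE15 farE24 farE25 farE35 dv01 dv02 dv03 dv04 dv05 dv12 dv13 dv14 dv15 dv23 dv24 dv25 dv34 dv35 dv45 e0 ne1 m1 ne2 m2 ne3 m3 e4])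
      next
        case False
        have e0: "E pp0 pp1" by fact
        have x4: "\<not> E pp4 pp5" by fact
        have m4: "E pp4 qq4" "E qq4 pp5" using n4 x4 by auto
        have iq1: "qq1 \<in> V" using m1 ev by blast
        have iq2: "qq2 \<in> V" using m2 ev by blast
        have iq3: "qq3 \<in> V" using m3 ev by blast
        have iq4: "qq4 \<in> V" using m4 ev by blast
        show False by (rule case_10000[OF sym irr p6 ban dom uniq indep inV0 inV1 inV2 inV3 inV4 inV5 iq1 iq2 iq3 iq4 far02 far03 far04 far05 far13 far14 far15 far24 far25 far35 farE02 farE03 farE04 farE05 farE13 farE14 farE15 farE24 farE25 farE35 dv01 dv02 dv03 dv04 dv05 dv12 dv13 dv14 dv15 dv23 dv24 dv25 dv34 dv35 dv45 e0 ne1 m1 ne2 m2 ne3 m3 x4 m4])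
      qed
    next
      case False
      show False
      proof (cases "E pp4 pp5")
        case True
        have x0: "\<not> E pp0 pp1" by fact
        have m0: "E pp0 qq0" "E qq0 pp1" using n0 x0 by auto
        have e4: "E pp4 pp5" by fact
        have iq0: "qq0 \<in> V" using m0 ev by blast
        have iq1: "qq1 \<in> V" using m1 ev by blast
        have iq2: "qq2 \<in> V" using m2 ev by blast
        have iq3: "qq3 \<in> V" using m3 ev by blast
        show False by (rule case_00001[OF sym irr p6 ban dom uniq indep inV0 inV1 inV2 inV3 inV4 inV5 iq0 iq1 iq2 iq3 far02 far03 far04 far05 far13 far14 far15 far24 far25 far35 farE02 farE03 farE04 farE05 farE13 farE14 farE15 farE24 farE25 farE35 dv01 dv02 dv03 dv04 dv05 dv12 dv13 dv14 dv15 dv23 dv24 dv25 dv34 dv35 dv45 x0 m0 ne1 m1 ne2 m2 ne3 m3 e4])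
      next
        case False
        have x0: "\<not> E pp0 pp1" by fact
        have m0: "E pp0 qq0" "E qq0 pp1" using n0 x0 by auto
        have x4: "\<not> E pp4 pp5" by fact
        have m4: "E pp4 qq4" "E qq4 pp5" using n4 x4 by auto
        have iq0: "qq0 \<in> V" using m0 ev by blast
        have iq1: "qq1 \<in> V" using m1 ev by blast
        have iq2: "qq2 \<in> V" using m2 ev by blast
        have iq3: "qq3 \<in> V" using m3 ev by blast
        have iq4: "qq4 \<in> V" using m4 ev by blast
        show False by (rule case_00000[OF sym irr p6 ban dom uniq indep inV0 inV1 inV2 inV3 inV4 inV5 iq0 iq1 iq2 iq3 iq4 far02 far03 far04 far05 far13 far14 far15 far24 far25 far35 farE02 farE03 farE04 farE05 farE13 farE14 farE15 farE24 farE25 farE35 dv01 dv02 dv03 dv04 dv05 dv12 dv13 dv14 dv15 dv23 dv24 dv25 dv34 dv35 dv45 x0 m0 ne1 m1 ne2 m2 ne3 m3 x4 m4])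
      qed
    qed
  qed
qed

end
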